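(* For every integer $n\ge3$, $$2^{n-3}=\sum_{(a_1,\dots,a_k)\in C(n)}(F_{a_1}-1)(F_{a_2}-1)\cdots(F_{a_k}-1),$$ where the only nonzero terms come from compositions all of whose parts exceed $2$.
   Context: $C(n)$ is the set of all compositions $(a_1,\dots,a_k)$ of $n$ (sequences of positive integers with sum $n$, any number of parts). Fibonacci numbers: $F_0=0$, $F_1=1$, $F_n=F_{n-1}+F_{n-2}$. *)

theory Defs
  imports Main "HOL-Number_Theory.Fib"
begin

definition compositions :: "nat \<Rightarrow> nat list set" where
  "compositions n = {as. (\<forall>a\<in>set as. 0 < a) \<and> sum_list as = n}"

end

theory Submission
  imports Defs
begin

definition g :: "nat \<Rightarrow> int" where "g a = int (fib a) - 1"
definition h :: "nat \<Rightarrow> int" where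
  "h n = (if n = 0 then 1 else if n < 3 then 0 else 2 ^ (n - 3))"

lemma fib_ge2: "fib (Suc (Suc (Suc k))) \<ge> 2"
proof -
  have "fib (Suc (Suc k)) \<ge> 1" by (induct k rule: fib.induct) auto
  moreover have "fib (Suc k) \<ge> 1" using fib_neq_0_nat[of "Suc k"] by simp
  ultimately show ?thesis by simp
qed

lemma h_Suc: "h (Suc m) = 2 * h m - (if m = 0 then 2 else 0) + (if m = 2 then 1 else 0)"
proof -
  consider "m = 0" | "m = 1" | "m = 2" | j where "m = 3 + j" using le_Suc_ex
    by (metis One_nat_def less_2_cases_iff linorder_not_le nat_less_le numeral_3_eq_3 numeral_2_eq_2 Suc_leI)
  then show ?thesis by cases (simp_all add: h_def)
qed

definition R :: "nat \<Rightarrow> int" where "R n = (\<Sum>a\<in>{1..n}. g a * h (n - a))"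

lemma R_step:
  assumes "n \<ge> 3"
  shows "R (Suc n) = 2 * R n"
proof -
  have "R (Suc n) = g (Suc n) * h 0 + (\<Sum>a\<in>{1..n}. g a * h (Suc (n - a)))"
    unfolding R_def by (simp add: Suc_diff_le)
  also have "(\<Sum>a\<in>{1..n}. g a * h (Suc (n - a))) =
     (\<Sum>a\<in>{1..n}. 2 * (g a * h (n - a)) - (if a = n then 2 * g a else 0) + (if a = n - 2 then g a else 0))"
    by (rule sum.cong) (auto simp: h_Suc algebra_simps)
  also have "\<dots> = 2 * R n - 2 * g n + g (n - 2)"
    using assms by (auto simp add: sum.distrib sum_subtractf sum_distrib_left R_def)
  finally have "R (Suc n) = g (Suc n) + 2 * R n - 2 * g n + g (n - 2)" by (simp add: h_def)
  moreover obtain k where "n = 3 + k" using assms le_Suc_ex by blast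
  then have k: "n = Suc (Suc (Suc k))" by simp
  ultimately show ?thesis by (simp add: g_def)
qed

lemma R_h: "n \<ge> 1 \<Longrightarrow> R n = h n"
proof (induction n rule: less_induct)
  case (less n)
  show ?case
  proof (cases "n \<le> 3")
    case True
    then have "n = 1 \<or> n = 2 \<or> n = 3" using less.prems by auto
    moreover have "R 1 = h 1" by (simp add: R_def h_def g_def)
    moreover have "R 2 = h 2" by (simp add: R_def h_def g_def numeral_2_eq_2)
    moreover have "R 3 = h 3" by (simp add: R_def h_def g_def numeral_3_eq_3 numeral_2_eq_2)
    ultimately show ?thesis by auto
  next
    case False
    then obtain m where m: "n = Suc m" "m \<ge> 3" by (cases n) auto
    then have "R n = 2 * R m" using R_step by simp
    also have "R m = h m" using less.IH m by simp
    moreover obtain j where "m = 3 + j" using m le_Suc_ex by blast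
    ultimately show ?thesis using m by (simp add: h_def)
  qed
qed

lemma comp0: "compositions 0 = {[]}"
  by (auto simp: compositions_def) (metis list.set_intros(1) neq_Nil_conv less_not_refl)

lemma compSuc: "compositions (Suc n) = (\<Union>a\<in>{1..Suc n}. (#) a ` compositions (Suc n - a))"
proof (intro equalityI subsetI)
  fix as assume A: "as \<in> compositions (Suc n)"
  then obtain a l where al: "as = a # l" by (cases as) (auto simp: compositions_def)
  with A have "a \<in> {1..Suc n}" "l \<in> compositions (Suc n - a)" by (auto simp: compositions_def)
  then show "as \<in> (\<Union>a\<in>{1..Suc n}. (#) a ` compositions (Suc n - a))" using al by blast
qed (auto simp: compositions_def)

lemma comp_finite: "finite (compositions n)"
proof (induction n rule: less_induct)
  case (less n)
  then show ?case
    by (cases n) (auto simp: comp0 compSuc)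
qed

definition S :: "nat \<Rightarrow> int" where
  "S n = (\<Sum>as\<in>compositions n. \<Prod>a\<leftarrow>as. g a)"

lemma S_Suc: "S (Suc n) = (\<Sum>a\<in>{1..Suc n}. g a * S (Suc n - a))"
proof -
  have "S (Suc n) = (\<Sum>a\<in>{1..Suc n}. \<Sum>as\<in>(#) a ` compositions (Suc n - a). \<Prod>x\<leftarrow>as. g x)"
    unfolding S_def compSuc
    by (rule sum.UNION_disjoint) (auto simp: comp_finite)
  also have "\<dots> = (\<Sum>a\<in>{1..Suc n}. g a * S (Suc n - a))"
  proof (rule sum.cong[OF refl])
    fix a
    have "(\<Sum>as\<in>(#) a ` compositions (Suc n - a). \<Prod>x\<leftarrow>as. g x)
        = (\<Sum>as\<in>compositions (Suc n - a). \<Prod>x\<leftarrow>a # as. g x)"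
      by (subst sum.reindex) (auto simp: inj_on_def)
    then show "(\<Sum>as\<in>(#) a ` compositions (Suc n - a). \<Prod>x\<leftarrow>as. g x) = g a * S (Suc n - a)"
      by (simp add: S_def sum_distrib_left)
  qed
  finally show ?thesis .
qed

lemma S_h: "S n = h n"
proof (induction n rule: less_induct)
  case (less n)
  show ?case
  proof (cases n)
    case 0 then show ?thesis by (simp add: S_def comp0 h_def)
  next
    case (Suc m)
    have "S n = (\<Sum>a\<in>{1..n}. g a * h (n - a))"
      unfolding Suc S_Suc
      by (rule sum.cong) (auto simp: less.IH Suc)
    also have "\<dots> = h n" using R_h[of n] Suc by (simp add: R_def)
    finally show ?thesis .
  qed
qed

lemma g_zero: "0 < a \<Longrightarrow> (g a = 0) \<longleftrightarrow> a \<le> 2"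
proof -
  assume "0 < a"
  show ?thesis
  proof (cases "a \<le> 2")
    case True then have "a = 1 \<or> a = 2" using \<open>0 < a\<close> by auto
    then show ?thesis by (auto simp: g_def numeral_2_eq_2)
  next
    case False
    then have "3 \<le> a" by simp
    then obtain k where "a = 3 + k" using le_Suc_ex by blast
    then have "a = Suc (Suc (Suc k))" by simp
    then show ?thesis using fib_ge2[of k] False by (simp add: g_def)
  qed
qed

theorem mainTheorem17:
  fixes n :: nat
  assumes "n \<ge> 3"
  shows "(2::int) ^ (n - 3) =
           (\<Sum>as\<in>compositions n. \<Prod>a\<leftarrow>as. (int (fib a) - 1))
         \<and> (\<forall>as\<in>compositions n.
              (\<Prod>a\<leftarrow>as. (int (fib a) - 1)) \<noteq> 0 \<longleftrightarrow> (\<forall>a\<in>set as. a > 2))"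
proof
  have "S n = 2 ^ (n - 3)" using S_h assms by (simp add: h_def)
  then show "(2::int) ^ (n - 3) = (\<Sum>as\<in>compositions n. \<Prod>a\<leftarrow>as. (int (fib a) - 1))"
    by (simp add: S_def g_def)
next
  show "\<forall>as\<in>compositions n.
              (\<Prod>a\<leftarrow>as. (int (fib a) - 1)) \<noteq> 0 \<longleftrightarrow> (\<forall>a\<in>set as. a > 2)"
  proof
    fix as assume as: "as \<in> compositions n"
    have e: "(\<lambda>a. int (fib a) - 1) = g" by (auto simp: g_def)
    have "(\<Prod>a\<leftarrow>as. (int (fib a) - 1)) = 0 \<longleftrightarrow> (\<exists>a\<in>set as. g a = 0)"
      unfolding e by (auto simp add: prod_list_zero_iff)
    also have "\<dots> \<longleftrightarrow> (\<exists>a\<in>set as. a \<le> 2)"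
      using as g_zero by (auto simp: compositions_def)
    finally show "(\<Prod>a\<leftarrow>as. (int (fib a) - 1)) \<noteq> 0 \<longleftrightarrow> (\<forall>a\<in>set as. a > 2)"
      by (auto simp: not_le)
  qed
qed

end
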